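(* Let $b>1$, $\gamma>0$ and $x_0\ge e$ be constants, and let $\zeta$ be a random variable whose tail function satisfies $$T_\zeta(x)=x^{-b}(\ln x)^{\gamma}\qquad\text{for all } x\ge x_0.$$ Then $|\zeta|_p\asymp (b-p)^{-(\gamma+1)/b}$ for $p\in[1,b)$ (i.e. the ratio of the two sides is bounded above and below by positive finite constants on $[1,b)$). Consequently $\zeta$ belongs to the space $G\psi^{b,\gamma+1}$, but $\|\zeta\|G\psi^{b,\gamma}=\infty$, where $\psi^{b,\delta}(p)=(b-p)^{-\delta/b}$, $p\in[1,b)$.
   Context: All random variables are defined on a probability space $(\Omega,F,\mathbf P)$. For $p\ge 1$, $|f|_p=(\mathbf E|f|^p)^{1/p}$. Given a positive continuous function $\psi$ on $[1,b)$, the Grand Lebesgue Space $G\psi$ consists of all random variables $f$ with finite norm $\|f\|G\psi=\sup_{p\in[1,b)}|f|_p/\psi(p)$. The tail function of a random variable $\xi$ is $T_\xi(x)=\max(\mathbf P(\xi\ge x),\mathbf P(\xi\le -x))$, $x\ge0$. *)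

theory Defs
  imports "HOL-Probability.Probability"
begin

definition lp_norm :: "'a measure \<Rightarrow> real \<Rightarrow> ('a \<Rightarrow> real) \<Rightarrow> ennreal" where
  "lp_norm M p f =
     (let m = (\<integral>\<^sup>+ \<omega>. ennreal (\<bar>f \<omega>\<bar> powr p) \<partial>M)
      in if m = \<top> then \<top> else ennreal (enn2real m powr (1 / p)))"

definition gls_norm :: "'a measure \<Rightarrow> real \<Rightarrow> (real \<Rightarrow> real) \<Rightarrow> ('a \<Rightarrow> real) \<Rightarrow> ennreal" where
  "gls_norm M b \<psi> f = (SUP p\<in>{1..<b}. lp_norm M p f / ennreal (\<psi> p))"

definition gls_space :: "'a measure \<Rightarrow> real \<Rightarrow> (real \<Rightarrow> real) \<Rightarrow> ('a \<Rightarrow> real) set" where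
  "gls_space M b \<psi> = {f. f \<in> borel_measurable M \<and> gls_norm M b \<psi> f < \<top>}"

definition psi_bd :: "real \<Rightarrow> real \<Rightarrow> real \<Rightarrow> real" where
  "psi_bd b \<delta> p = (b - p) powr (- \<delta> / b)"

definition tail_fun :: "'a measure \<Rightarrow> ('a \<Rightarrow> real) \<Rightarrow> real \<Rightarrow> real" where
  "tail_fun M \<xi> x = max (measure M {\<omega>\<in>space M. \<xi> \<omega> \<ge> x}) (measure M {\<omega>\<in>space M. \<xi> \<omega> \<le> - x})"

end

theory Submission
  imports Defs
begin


lemma pw_lower:
  fixes x p :: real
  assumes "p > 0" "x \<ge> 0"
  shows "(\<Sum>k\<in>{n0..<M}. if exp (real k) \<le> x then exp (real k * p) - exp ((real k - 1) * p) else 0) \<le> x powr p"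
proof (induction M)
  case 0
  then show ?case by simp
next
  case (Suc M)
  show ?case
  proof (cases "M < n0")
    case True
    then have "{n0..<Suc M} = {}" by auto
    then show ?thesis by simp
  next
    case False
    then have split: "{n0..<Suc M} = insert M {n0..<M}" by auto
    show ?thesis
    proof (cases "exp (real M) \<le> x")
      case True
      have "(\<Sum>k\<in>{n0..<Suc M}. if exp (real k) \<le> x then exp (real k * p) - exp ((real k - 1) * p) else 0)
          = (\<Sum>k\<in>{n0..<Suc M}. exp ((real (Suc k) - 1) * p) - exp ((real k - 1) * p))"
      proof (rule sum.cong)
        fix k assume "k \<in> {n0..<Suc M}"
        then have "exp (real k) \<le> exp (real M)" by simp
        with True have "exp (real k) \<le> x" by linarith
        then show "(if exp (real k) \<le> x then exp (real k * p) - exp ((real k - 1) * p) else 0)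
          = exp ((real (Suc k) - 1) * p) - exp ((real k - 1) * p)" by simp
      qed simp
      also have "\<dots> = exp ((real (Suc M) - 1) * p) - exp ((real n0 - 1) * p)"
        using sum_Suc_diff'[of n0 "Suc M" "\<lambda>k. exp ((real k - 1) * p)"] False by simp
      also have "\<dots> \<le> exp (real M * p)" by simp
      also have "\<dots> = exp (real M) powr p" by (simp add: powr_def mult.commute)
      also have "\<dots> \<le> x powr p" using True assms by (simp add: powr_mono2)
      finally show ?thesis .
    next
      case False
      then show ?thesis using Suc split by simp
    qed
  qed
qed

lemma pw_upper:
  fixes x p :: real
  assumes "p > 0" "x \<ge> 0" "x < exp (real (K + d))"
  shows "x powr p \<le> exp (real K * p) + (\<Sum>k\<in>{K..<K+d}. if exp (real k) \<le> x then exp ((real k + 1) * p) - exp (real k * p) else 0)"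
  using assms(3)
proof (induction d)
  case 0
  have "x powr p \<le> exp (real K) powr p" using 0 assms by (intro powr_mono2) auto
  moreover have "exp (real K) powr p = exp (real K * p)" by (simp add: powr_def mult.commute)
  ultimately show ?case by simp
next
  case (Suc d)
  have split: "{K..<K + Suc d} = insert (K+d) {K..<K+d}" by auto
  show ?case
  proof (cases "x < exp (real (K + d))")
    case True
    have "exp (real K * p) + (\<Sum>k\<in>{K..<K+d}. if exp (real k) \<le> x then exp ((real k + 1) * p) - exp (real k * p) else 0)
       \<le> exp (real K * p) + (\<Sum>k\<in>{K..<K+Suc d}. if exp (real k) \<le> x then exp ((real k + 1) * p) - exp (real k * p) else 0)"
      using split assms(1) by simp
    then show ?thesis using Suc True by linarith
  next
    case False
    have "(\<Sum>k\<in>{K..<K+Suc d}. if exp (real k) \<le> x then exp ((real k + 1) * p) - exp (real k * p) else 0)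
        = (\<Sum>k\<in>{K..<K+Suc d}. exp (real (Suc k) * p) - exp (real k * p))"
    proof (rule sum.cong)
      fix k assume "k \<in> {K..<K+Suc d}"
      then have "exp (real k) \<le> exp (real (K+d))" by simp
      with False have "exp (real k) \<le> x" by linarith
      then show "(if exp (real k) \<le> x then exp ((real k + 1) * p) - exp (real k * p) else 0)
          = exp (real (Suc k) * p) - exp (real k * p)" by (simp add: add.commute)
    qed simp
    also have "\<dots> = exp (real (K + Suc d) * p) - exp (real K * p)"
      using sum_Suc_diff'[of K "K + Suc d" "\<lambda>k. exp (real k * p)"] by simp
    finally have eq: "(\<Sum>k\<in>{K..<K+Suc d}. if exp (real k) \<le> x then exp ((real k + 1) * p) - exp (real k * p) else 0) = exp (real (K + Suc d) * p) - exp (real K * p)" .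
    have "x powr p \<le> exp (real (K + Suc d)) powr p" using Suc.prems assms by (intro powr_mono2) auto
    moreover have "exp (real (K + Suc d)) powr p = exp (real (K + Suc d) * p)" by (simp add: powr_def mult.commute)
    ultimately show ?thesis using eq by simp
  qed
qed



lemma pow_exp_bound:
  fixes t a g :: real
  assumes "t > 0" "a > 0" "g > 0"
  shows "t powr g * exp (- a * t) \<le> (g / a) powr g"
proof -
  have y: "ln (a * t / g) \<le> a * t / g - 1" using assms by (intro ln_le_minus_one) auto
  have "ln (a * t / g) = ln (a * t) - ln g" using assms by (simp add: ln_div)
  moreover have "ln (a * t) = ln a + ln t" using assms by (simp add: ln_mult)
  moreover have "ln (g / a) = ln g - ln a" using assms by (simp add: ln_div)
  ultimately have e1: "ln (a * t / g) = ln t - ln (g / a)" by linarith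
  have "g * (ln t - ln (g/a)) \<le> g * (a * t / g)" using y e1 assms
    by (intro mult_left_mono) auto
  also have "g * (a * t / g) = a * t" using assms by simp
  finally have "g * ln t - a * t \<le> g * ln (g / a)" by (simp add: algebra_simps)
  then have "exp (g * ln t - a * t) \<le> exp (g * ln (g / a))" by simp
  moreover have "t powr g * exp (- a * t) = exp (g * ln t - a * t)"
    using assms by (simp add: powr_def exp_diff exp_minus divide_inverse)
  moreover have "(g / a) powr g = exp (g * ln (g / a))" using assms by (simp add: powr_def)
  ultimately show ?thesis by simp
qed
locale mt2 = prob_space +
  fixes \<zeta> :: "'a \<Rightarrow> real" and b g :: real and K :: nat
  assumes zm: "\<zeta> \<in> borel_measurable M"
    and b1: "b > 1" and g0: "g > 0" and K1: "K \<ge> 1"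
    and tail: "\<And>k. k \<ge> K \<Longrightarrow> tail_fun M \<zeta> (exp (real k)) = exp (real k) powr (- b) * (real k) powr g"
begin

definition A :: "nat \<Rightarrow> 'a set" where
  "A k = {\<omega>\<in>space M. exp (real k) \<le> \<bar>\<zeta> \<omega>\<bar>}"

lemma A_sets[measurable]: "A k \<in> sets M"
  unfolding A_def using zm by simp

lemma tailA:
  assumes "k \<ge> K"
  shows "exp (- b * real k) * (real k) powr g \<le> measure M (A k)"
    and "measure M (A k) \<le> 2 * (exp (- b * real k) * (real k) powr g)"
proof -
  define P where "P = {\<omega>\<in>space M. \<zeta> \<omega> \<ge> exp (real k)}"
  define Q where "Q = {\<omega>\<in>space M. \<zeta> \<omega> \<le> - exp (real k)}"
  have PQ: "P \<in> sets M" "Q \<in> sets M" unfolding P_def Q_def using zm by simp_all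
  have T: "tail_fun M \<zeta> (exp (real k)) = exp (- b * real k) * (real k) powr g"
    using tail[OF assms] by (simp add: powr_def)
  have tf: "tail_fun M \<zeta> (exp (real k)) = max (measure M P) (measure M Q)"
    unfolding tail_fun_def P_def Q_def by simp
  have AU: "A k = P \<union> Q" unfolding A_def P_def Q_def by auto
  have "measure M P \<le> measure M (A k)" "measure M Q \<le> measure M (A k)"
    unfolding AU using PQ by (auto intro!: finite_measure_mono)
  then show "exp (- b * real k) * (real k) powr g \<le> measure M (A k)" using T tf by simp
  have "measure M (A k) \<le> measure M P + measure M Q"
    unfolding AU using PQ by (intro measure_subadditive) auto
  then show "measure M (A k) \<le> 2 * (exp (- b * real k) * (real k) powr g)" using T tf by simp
qed

end

lemma alg1: "(2 * a * (c * t)) * (2 * (1 + b) / s) = 4 * a * (1 + b) * c * (t / s)" for a b c t s :: real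
  by (simp add: divide_inverse mult_ac)

lemma alg2: "x > 0 \<Longrightarrow> 1 - 1 / (1 + x) = x / (1 + x)" for x :: real
  by (simp add: field_simps)

lemma alg3: "x > 0 \<Longrightarrow> 1 / (x / (1 + x)) = (1 + x) / x" for x :: real
  by simp

context mt2 begin

lemma lower:
  assumes p: "1 \<le> p" "p < b"
  shows "ennreal ((1 - exp (-1)) * exp (- 2 * real K * b) * (b - p) powr (- (g + 1)))
           \<le> (\<integral>\<^sup>+ \<omega>. ennreal (\<bar>\<zeta> \<omega>\<bar> powr p) \<partial>M)"
proof -
  define s where "s = b - p"
  have s0: "s > 0" and s1: "s \<le> b - 1" using p unfolding s_def by auto
  define n where "n = nat \<lceil>1 / s\<rceil>"
  define N where "N = K * n"
  have h1: "0 < 1/s" using s0 by simp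
  have "0 < real_of_int \<lceil>1/s\<rceil>" using h1 le_of_int_ceiling[of "1/s"] by linarith
  have cc0: "0 \<le> \<lceil>1/s\<rceil>" using h1 by (simp only: zero_le_ceiling)
  have rn: "real n = of_int \<lceil>1/s\<rceil>" unfolding n_def using cc0 by simp
  have n1: "real n \<ge> 1 / s" unfolding rn by simp
  have n2: "real n \<le> 1 / s + 1" unfolding rn using ceiling_correct[of "1/s"] by linarith
  have "real n > 0" using n1 h1 by linarith
  then have npos: "n \<ge> 1" by simp
  have NK: "N \<ge> K" unfolding N_def using npos by simp
  have N1: "real N \<ge> 1 / s"
  proof -
    have "real K \<ge> 1" using K1 by simp
    then have "1 * real n \<le> real K * real n" by (intro mult_right_mono) auto
    then have "real n \<le> real N" unfolding N_def by simp
    with n1 show ?thesis by linarith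
  qed
  have sN: "s * real N \<le> real K * b"
  proof -
    have "s * real n \<le> s * (1/s + 1)" using n2 s0 by (intro mult_left_mono) auto
    also have "\<dots> = 1 + s" using s0 by (simp add: field_simps)
    finally have "s * real n \<le> b" using s1 by linarith
    then have "real K * (s * real n) \<le> real K * b" by (intro mult_left_mono) auto
    then show ?thesis unfolding N_def by (simp add: algebra_simps)
  qed
  define d where "d k = exp (real k * p) - exp ((real k - 1) * p)" for k :: nat
  have d0: "d k \<ge> 0" for k unfolding d_def using p by simp
  have pw: "(\<Sum>k\<in>{N..<2*N}. ennreal (d k) * indicator (A k) \<omega>) \<le> ennreal (\<bar>\<zeta> \<omega>\<bar> powr p)"
    if "\<omega> \<in> space M" for \<omega>
  proof -
    have "(\<Sum>k\<in>{N..<2*N}. ennreal (d k) * indicator (A k) \<omega>)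
        = (\<Sum>k\<in>{N..<2*N}. ennreal (if exp (real k) \<le> \<bar>\<zeta> \<omega>\<bar> then d k else 0))"
      using that by (intro sum.cong) (auto simp: A_def indicator_def)
    also have "\<dots> = ennreal (\<Sum>k\<in>{N..<2*N}. if exp (real k) \<le> \<bar>\<zeta> \<omega>\<bar> then d k else 0)"
      using d0 by (intro sum_ennreal) auto
    also have "\<dots> \<le> ennreal (\<bar>\<zeta> \<omega>\<bar> powr p)"
      using pw_lower[of p "\<bar>\<zeta> \<omega>\<bar>" N "2*N"] p unfolding d_def by (intro ennreal_leI) auto
    finally show ?thesis .
  qed
  have "(\<integral>\<^sup>+ \<omega>. (\<Sum>k\<in>{N..<2*N}. ennreal (d k) * indicator (A k) \<omega>) \<partial>M)
      = (\<Sum>k\<in>{N..<2*N}. \<integral>\<^sup>+ \<omega>. ennreal (d k) * indicator (A k) \<omega> \<partial>M)"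
    by (intro nn_integral_sum) simp
  also have "\<dots> = (\<Sum>k\<in>{N..<2*N}. ennreal (d k * measure M (A k)))"
    using d0 by (intro sum.cong) (simp_all add: nn_integral_cmult_indicator emeasure_eq_measure ennreal_mult)
  also have "\<dots> = ennreal (\<Sum>k\<in>{N..<2*N}. d k * measure M (A k))"
    using d0 by (intro sum_ennreal) auto
  finally have I: "(\<integral>\<^sup>+ \<omega>. (\<Sum>k\<in>{N..<2*N}. ennreal (d k) * indicator (A k) \<omega>) \<partial>M)
      = ennreal (\<Sum>k\<in>{N..<2*N}. d k * measure M (A k))" .
  define c where "c = 1 - exp (-1::real)"
  have c0: "c > 0" unfolding c_def by simp
  have tm: "c * (exp (- 2 * s * real N) * real N powr g) \<le> d k * measure M (A k)"
    if k: "k \<in> {N..<2*N}" for k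
  proof -
    have kK: "k \<ge> K" using k NK by simp
    have kpos: "real k > 0" using kK K1 by simp
    have dk: "d k = exp (real k * p) * (1 - exp (- p))"
    proof -
      have "(real k - 1) * p = real k * p + (- p)" by (simp add: algebra_simps)
      then have "exp ((real k - 1) * p) = exp (real k * p) * exp (- p)" by (simp only: exp_add)
      then show ?thesis unfolding d_def by (simp add: right_diff_distrib)
    qed
    have "c \<le> 1 - exp (- p)" unfolding c_def using p by simp
    then have "c * exp (real k * p) \<le> d k" unfolding dk by (simp add: mult.commute)
    moreover have "exp (- b * real k) * (real k) powr g \<le> measure M (A k)" using tailA(1)[OF kK] .
    ultimately have "c * exp (real k * p) * (exp (- b * real k) * (real k) powr g) \<le> d k * measure M (A k)"
      using c0 d0[of k] by (intro mult_mono) auto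
    moreover have "c * exp (real k * p) * (exp (- b * real k) * (real k) powr g) = c * (exp (- s * real k) * real k powr g)"
    proof -
      have "exp (real k * p) * exp (- b * real k) = exp (real k * p + - b * real k)" by (simp only: exp_add)
      also have "real k * p + - b * real k = - s * real k" unfolding s_def by (simp add: algebra_simps)
      finally show ?thesis by (simp add: mult.assoc)
    qed
    moreover have "exp (- 2 * s * real N) \<le> exp (- s * real k)" using k s0 by simp
    moreover have "real N powr g \<le> real k powr g" using k g0 by (intro powr_mono2) auto
    ultimately have "c * (exp (- 2 * s * real N) * real N powr g) \<le> c * (exp (- s * real k) * real k powr g)"
      using c0 by (intro mult_left_mono mult_mono) auto
    with \<open>c * exp (real k * p) * (exp (- b * real k) * (real k) powr g) = c * (exp (- s * real k) * real k powr g)\<close>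
      \<open>c * exp (real k * p) * (exp (- b * real k) * (real k) powr g) \<le> d k * measure M (A k)\<close>
    show ?thesis by linarith
  qed
  have "real N * (c * (exp (- 2 * s * real N) * real N powr g)) \<le> (\<Sum>k\<in>{N..<2*N}. d k * measure M (A k))"
  proof -
    have "(\<Sum>k\<in>{N..<2*N}. c * (exp (- 2 * s * real N) * real N powr g)) \<le> (\<Sum>k\<in>{N..<2*N}. d k * measure M (A k))"
      by (rule sum_mono) (rule tm)
    moreover have "card {N..<2*N} = N" by simp
    ultimately show ?thesis by simp
  qed
  moreover have "c * exp (- 2 * real K * b) * s powr (- (g + 1)) \<le> real N * (c * (exp (- 2 * s * real N) * real N powr g))"
  proof -
    have Npos: "real N > 0" using N1 s0 by (meson divide_pos_pos less_le_trans zero_less_one)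
    have "s powr (- (g + 1)) = (1 / s) powr (g + 1)"
    proof -
      have "s powr (- (g + 1)) = inverse (s powr (g + 1))" by (rule powr_minus)
      moreover have "(1 / s) powr (g + 1) = 1 / s powr (g + 1)" using s0 by (simp add: powr_divide)
      ultimately show ?thesis by (simp add: divide_inverse)
    qed
    also have "\<dots> \<le> real N powr (g + 1)" using N1 s0 g0 by (intro powr_mono2) auto
    also have "\<dots> = real N * real N powr g" using Npos by (simp add: powr_add)
    finally have a: "s powr (- (g + 1)) \<le> real N * real N powr g" .
    have e: "exp (- 2 * real K * b) \<le> exp (- 2 * s * real N)" using sN by simp
    have "c * exp (- 2 * real K * b) * s powr (- (g + 1)) \<le> c * exp (- 2 * s * real N) * (real N * real N powr g)"
      using a e c0 by (intro mult_mono) auto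
    then show ?thesis by (simp add: algebra_simps)
  qed
  ultimately have R: "c * exp (- 2 * real K * b) * s powr (- (g + 1)) \<le> (\<Sum>k\<in>{N..<2*N}. d k * measure M (A k))"
    by linarith
  have "ennreal (c * exp (- 2 * real K * b) * s powr (- (g + 1))) \<le> (\<integral>\<^sup>+ \<omega>. (\<Sum>k\<in>{N..<2*N}. ennreal (d k) * indicator (A k) \<omega>) \<partial>M)"
    unfolding I using R by (intro ennreal_leI)
  also have "\<dots> \<le> (\<integral>\<^sup>+ \<omega>. ennreal (\<bar>\<zeta> \<omega>\<bar> powr p) \<partial>M)"
    using pw by (intro nn_integral_mono) auto
  finally show ?thesis unfolding c_def s_def .
qed


lemma upper:
  assumes p: "1 \<le> p" "p < b"
  shows "(\<integral>\<^sup>+ \<omega>. ennreal (\<bar>\<zeta> \<omega>\<bar> powr p) \<partial>M)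
          \<le> ennreal (exp (real K * b) + 4 * exp b * (1 + b) * (2 * g) powr g * (b - p) powr (- (g + 1)))"
proof -
  define s where "s = b - p"
  have s0: "s > 0" and s1: "s \<le> b - 1" using p unfolding s_def by auto
  define u where "u k = (if K \<le> k then exp ((real k + 1) * p) - exp (real k * p) else 0)" for k :: nat
  have u0: "u k \<ge> 0" for k unfolding u_def using p by simp
  have pw: "ennreal (\<bar>\<zeta> \<omega>\<bar> powr p) \<le> ennreal (exp (real K * p)) + (\<Sum>k. ennreal (u k) * indicator (A k) \<omega>)"
    if \<omega>: "\<omega> \<in> space M" for \<omega>
  proof -
    define x where "x = \<bar>\<zeta> \<omega>\<bar>"
    define d where "d = nat \<lceil>x\<rceil> + 1"
    have x0: "x \<ge> 0" unfolding x_def by simp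
    have "x < real d" unfolding d_def using le_of_int_ceiling[of x] x0 by linarith
    also have "real d \<le> real (K + d)" by simp
    also have "real (K + d) < exp (real (K + d))"
      using exp_ge_add_one_self[of "real (K + d)"] by linarith
    finally have xd: "x < exp (real (K + d))" .
    have h: "x powr p \<le> exp (real K * p) + (\<Sum>k\<in>{K..<K+d}. if exp (real k) \<le> x then exp ((real k + 1) * p) - exp (real k * p) else 0)"
      using pw_upper[OF _ x0 xd] p by simp
    have "(\<Sum>k\<in>{K..<K+d}. ennreal (u k) * indicator (A k) \<omega>)
        = (\<Sum>k\<in>{K..<K+d}. ennreal (if exp (real k) \<le> x then exp ((real k + 1) * p) - exp (real k * p) else 0))"
      using \<omega> by (intro sum.cong) (auto simp: A_def indicator_def u_def x_def)
    also have "\<dots> = ennreal (\<Sum>k\<in>{K..<K+d}. if exp (real k) \<le> x then exp ((real k + 1) * p) - exp (real k * p) else 0)"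
      using p by (intro sum_ennreal) auto
    finally have eqs: "(\<Sum>k\<in>{K..<K+d}. ennreal (u k) * indicator (A k) \<omega>) = ennreal (\<Sum>k\<in>{K..<K+d}. if exp (real k) \<le> x then exp ((real k + 1) * p) - exp (real k * p) else 0)" .
    have "ennreal (x powr p) \<le> ennreal (exp (real K * p)) + ennreal (\<Sum>k\<in>{K..<K+d}. if exp (real k) \<le> x then exp ((real k + 1) * p) - exp (real k * p) else 0)"
      using h p by (subst ennreal_plus[symmetric]) (auto intro!: ennreal_leI sum_nonneg)
    also have "\<dots> = ennreal (exp (real K * p)) + (\<Sum>k\<in>{K..<K+d}. ennreal (u k) * indicator (A k) \<omega>)"
      using eqs by simp
    also have "(\<Sum>k\<in>{K..<K+d}. ennreal (u k) * indicator (A k) \<omega>) \<le> (\<Sum>k. ennreal (u k) * indicator (A k) \<omega>)"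
      by (rule sum_le_suminf) (auto intro: summableI)
    finally show ?thesis unfolding x_def by (simp add: add_left_mono)
  qed
  have "(\<integral>\<^sup>+ \<omega>. ennreal (\<bar>\<zeta> \<omega>\<bar> powr p) \<partial>M)
     \<le> (\<integral>\<^sup>+ \<omega>. ennreal (exp (real K * p)) + (\<Sum>k. ennreal (u k) * indicator (A k) \<omega>) \<partial>M)"
    using pw by (intro nn_integral_mono) auto
  also have "\<dots> = (\<integral>\<^sup>+ \<omega>. ennreal (exp (real K * p)) \<partial>M) + (\<integral>\<^sup>+ \<omega>. (\<Sum>k. ennreal (u k) * indicator (A k) \<omega>) \<partial>M)"
    by (intro nn_integral_add) auto
  also have "(\<integral>\<^sup>+ \<omega>. ennreal (exp (real K * p)) \<partial>M) = ennreal (exp (real K * p))"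
    by (simp add: emeasure_space_1)
  also have "(\<integral>\<^sup>+ \<omega>. (\<Sum>k. ennreal (u k) * indicator (A k) \<omega>) \<partial>M) = (\<Sum>k. \<integral>\<^sup>+ \<omega>. ennreal (u k) * indicator (A k) \<omega> \<partial>M)"
    by (intro nn_integral_suminf) auto
  also have "\<dots> = (\<Sum>k. ennreal (u k * measure M (A k)))"
    using u0 by (simp add: nn_integral_cmult_indicator emeasure_eq_measure ennreal_mult)
  finally have I: "(\<integral>\<^sup>+ \<omega>. ennreal (\<bar>\<zeta> \<omega>\<bar> powr p) \<partial>M) \<le> ennreal (exp (real K * p)) + (\<Sum>k. ennreal (u k * measure M (A k)))" .
  define q where "q = exp (- s / 2)"
  define D where "D = 2 * exp b * (2 * g / s) powr g"
  have q0: "0 < q" "q < 1" unfolding q_def using s0 by auto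
  have tm: "u k * measure M (A k) \<le> D * q ^ k" for k
  proof (cases "K \<le> k")
    case False
    then show ?thesis unfolding u_def D_def using q0 by simp
  next
    case True
    have kpos: "real k > 0" using True K1 by simp
    have uk: "u k = (exp p - 1) * exp (real k * p)"
    proof -
      have "exp ((real k + 1) * p) = exp p * exp (real k * p)"
        by (simp only: exp_add[symmetric]) (simp add: algebra_simps)
      then show ?thesis unfolding u_def using True by (simp add: algebra_simps)
    qed
    have "exp p \<le> exp b" using p by simp
    then have ep: "exp p - 1 \<le> exp b" by linarith
    have E: "exp (real k * p) * exp (- b * real k) = exp (- s * real k)"
    proof -
      have "exp (real k * p) * exp (- b * real k) = exp (real k * p + - b * real k)" by (simp only: exp_add)
      also have "real k * p + - b * real k = - s * real k" unfolding s_def by (simp add: algebra_simps)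
      finally show ?thesis .
    qed
    have F: "exp (- s * real k) = exp (- (s/2) * real k) * exp (- (s/2) * real k)"
      by (simp only: exp_add[symmetric]) (simp add: algebra_simps)
    have "u k * measure M (A k) \<le> exp b * exp (real k * p) * (2 * (exp (- b * real k) * (real k) powr g))"
      unfolding uk using ep tailA(2)[OF True] p by (intro mult_mono) auto
    also have "\<dots> = 2 * exp b * (real k) powr g * (exp (real k * p) * exp (- b * real k))"
      by (simp only: mult_ac)
    also have "\<dots> = 2 * exp b * (real k) powr g * (exp (- (s/2) * real k) * exp (- (s/2) * real k))"
      by (simp only: E F)
    also have "\<dots> = 2 * exp b * ((real k) powr g * exp (- (s/2) * real k)) * exp (- (s/2) * real k)"
      by (simp only: mult_ac)
    also have "\<dots> \<le> 2 * exp b * (g / (s/2)) powr g * exp (- (s/2) * real k)"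
      using pow_exp_bound[OF kpos _ g0, of "s/2"] s0 by (intro mult_right_mono mult_left_mono) auto
    also have "exp (- (s/2) * real k) = q ^ k" unfolding q_def
      using exp_of_nat_mult[of k "- s / 2"] by (simp add: mult.commute)
    also have "g / (s/2) = 2 * g / s" by simp
    finally show ?thesis unfolding D_def by simp
  qed
  have D0: "D \<ge> 0" unfolding D_def by simp
  have "(\<Sum>k. ennreal (u k * measure M (A k))) \<le> (\<Sum>k. ennreal (D * q ^ k))"
    using tm by (intro suminf_le) (auto intro: summableI ennreal_leI)
  also have "\<dots> = ennreal (\<Sum>k. D * q ^ k)"
    using D0 q0 by (intro suminf_ennreal2) (auto intro: summable_mult summable_geometric)
  also have "(\<Sum>k. D * q ^ k) = D / (1 - q)"
    using q0 by (simp add: suminf_mult summable_geometric suminf_geometric)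
  finally have S: "(\<Sum>k. ennreal (u k * measure M (A k))) \<le> ennreal (D / (1 - q))" .
  have Dq: "D / (1 - q) \<le> 4 * exp b * (1 + b) * (2 * g) powr g * s powr (- (g + 1))"
  proof -
    have e1: "1 + s/2 \<le> exp (s/2)" by (rule exp_ge_add_one_self)
    have qe: "q = 1 / exp (s/2)" unfolding q_def by (simp add: exp_minus inverse_eq_divide)
    have "1 / exp (s/2) \<le> 1 / (1 + s/2)" using e1 s0 by (intro frac_le) auto
    then have qb: "q \<le> 1 / (1 + s/2)" unfolding qe .
    have "1 - 1/(1+s/2) = s/2/(1+s/2)" using s0 by (intro alg2) simp
    with qb have qs: "s / 2 / (1 + s/2) \<le> 1 - q" by linarith
    have wpos: "0 < s / 2 / (1 + s/2)" using s0 by simp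
    have "1 / (1 - q) \<le> 1 / (s / 2 / (1 + s/2))"
      using qs wpos by (intro frac_le) auto
    also have "1 / (s / 2 / (1 + s/2)) = (1 + s/2) / (s/2)" using s0 by (intro alg3) simp
    finally have "1 / (1 - q) \<le> (1 + s/2) / (s/2)" .
    also have "\<dots> \<le> (1 + b) / (s / 2)" using s0 s1 by (intro divide_right_mono) auto
    also have "\<dots> = 2 * (1 + b) / s" by simp
    finally have iq: "1 / (1 - q) \<le> 2 * (1 + b) / s" .
    have "(2 * g / s) powr g = (2 * g) powr g * s powr (- g)"
    proof -
      have "(2 * g / s) powr g = (2 * g) powr g / s powr g" by (rule powr_divide)
      then show ?thesis by (simp add: powr_minus divide_inverse)
    qed
    have "D / (1 - q) = D * (1 / (1 - q))" by simp
    also have "\<dots> \<le> D * (2 * (1 + b) / s)" using iq D0 by (intro mult_left_mono) auto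
    also have "\<dots> = 4 * exp b * (1 + b) * (2 * g) powr g * (s powr (- g) / s)"
      unfolding D_def \<open>(2 * g / s) powr g = (2 * g) powr g * s powr (- g)\<close> by (rule alg1)
    also have "s powr (- g) / s = s powr (- (g + 1))"
      using s0 by (simp add: powr_diff powr_minus divide_inverse powr_add)
    finally show ?thesis .
  qed
  have X: "exp (real K * p) \<le> exp (real K * b)" using p by (simp add: mult_left_mono)
  define B where "B = 4 * exp b * (1 + b) * (2 * g) powr g * s powr (- (g + 1))"
  have B0: "B \<ge> 0" unfolding B_def using b1 by simp
  have Y: "(\<Sum>k. ennreal (u k * measure M (A k))) \<le> ennreal B"
    by (rule order_trans[OF S]) (unfold B_def, rule ennreal_leI[OF Dq])
  have "ennreal (exp (real K * p)) + (\<Sum>k. ennreal (u k * measure M (A k))) \<le> ennreal (exp (real K * b)) + ennreal B"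
    by (rule add_mono[OF ennreal_leI[OF X] Y])
  also have "\<dots> = ennreal (exp (real K * b) + B)" by (rule ennreal_plus[symmetric]) (simp_all add: B0)
  finally have Z: "ennreal (exp (real K * p)) + (\<Sum>k. ennreal (u k * measure M (A k))) \<le> ennreal (exp (real K * b) + B)" .
  show ?thesis using order_trans[OF I Z] unfolding B_def s_def .
qed
end


lemma slns:
  fixes s b :: real
  assumes "0 < s" "s \<le> b" "1 < b"
  shows "s * \<bar>ln s\<bar> \<le> 1 + b * b"
proof (cases "s \<le> 1")
  case True
  have "ln (1/s) \<le> 1/s - 1" using assms by (intro ln_le_minus_one) auto
  moreover have "ln (1/s) = - ln s" using assms by (simp add: ln_div)
  moreover have "ln s \<le> 0" using True assms by simp
  ultimately have "\<bar>ln s\<bar> \<le> 1/s" by linarith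
  then have "s * \<bar>ln s\<bar> \<le> s * (1/s)" using assms by (intro mult_left_mono) auto
  moreover have "s * (1/s) = 1" using assms by simp
  moreover have "b * b \<ge> 0" by simp
  ultimately show ?thesis by linarith
next
  case False
  have "ln s \<le> s - 1" using assms by (intro ln_le_minus_one) auto
  moreover have "ln s \<ge> 0" using False by simp
  ultimately have "\<bar>ln s\<bar> \<le> b" using assms by linarith
  then have "s * \<bar>ln s\<bar> \<le> b * b" using assms by (intro mult_mono) auto
  then show ?thesis by simp
qed

lemma ratio:
  fixes b p G :: real
  assumes "1 < b" "1 \<le> p" "p < b" "G > 0"
  shows "exp (- (G * (1 + b * b))) * (b - p) powr (- G / b) \<le> (b - p) powr (- G * (1 / p))"
    and "(b - p) powr (- G * (1 / p)) \<le> exp (G * (1 + b * b)) * (b - p) powr (- G / b)"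
proof -
  define s where "s = b - p"
  have s0: "s > 0" "s \<le> b" using assms unfolding s_def by auto
  define t where "t = G / p - G / b"
  have te: "- G * (1 / p) = - G / b + - t" unfolding t_def by (simp add: field_simps)
  have tf: "t = G * s / (p * b)" unfolding t_def s_def using assms by (simp add: field_simps)
  have t0: "t \<ge> 0" unfolding tf using assms s0 by simp
  have pb: "p * b \<ge> 1" using assms by (metis less_eq_real_def mult_mono one_le_numeral order.trans le_numeral_extra(4) mult_1 less_le_trans zero_le_one)
  have "t \<le> G * s" unfolding tf using pb assms s0
    by (simp add: divide_le_eq)
  then have "t * \<bar>ln s\<bar> \<le> G * s * \<bar>ln s\<bar>" by (intro mult_right_mono) auto
  also have "\<dots> = G * (s * \<bar>ln s\<bar>)" by simp
  also have "\<dots> \<le> G * (1 + b * b)" using slns[OF s0(1) s0(2) assms(1)] assms by (intro mult_left_mono) auto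
  finally have tl: "t * \<bar>ln s\<bar> \<le> G * (1 + b * b)" .
  have "\<bar>- t * ln s\<bar> = t * \<bar>ln s\<bar>" using t0 by (simp add: abs_mult)
  with tl have "- (G * (1 + b * b)) \<le> - t * ln s" "- t * ln s \<le> G * (1 + b * b)" by linarith+
  then have e: "exp (- (G * (1 + b * b))) \<le> exp (- t * ln s)" "exp (- t * ln s) \<le> exp (G * (1 + b * b))" by simp_all
  have eq: "s powr (- G * (1 / p)) = s powr (- G / b) * exp (- t * ln s)"
  proof -
    have "s powr (-G/b + -t) = s powr (-G/b) * s powr (-t)" by (rule powr_add)
    moreover have "s powr (-t) = exp (-t * ln s)" using s0 by (simp add: powr_def mult.commute)
    ultimately show ?thesis unfolding te by simp
  qed
  have pp: "s powr (- G / b) \<ge> 0" by simp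
  show "exp (- (G * (1 + b * b))) * (b - p) powr (- G / b) \<le> (b - p) powr (- G * (1 / p))"
    using mult_right_mono[OF e(1) pp] eq unfolding s_def by (simp add: mult.commute)
  show "(b - p) powr (- G * (1 / p)) \<le> exp (G * (1 + b * b)) * (b - p) powr (- G / b)"
    using mult_right_mono[OF e(2) pp] eq unfolding s_def by (simp add: mult.commute)
qed


context mt2 begin

definition "cL = min ((1 - exp (-1)) * exp (- 2 * real K * b)) 1"
definition "CU = max (exp (real K * b) * (b - 1) powr (g + 1) + 4 * exp b * (1 + b) * (2 * g) powr g) 1"

lemma cL: "0 < cL" "cL \<le> 1" unfolding cL_def by auto
lemma CU: "1 \<le> CU" unfolding CU_def by auto

lemma lp_bounds:
  assumes p: "1 \<le> p" "p < b"
  shows "ennreal (cL * exp (- ((g + 1) * (1 + b * b))) * (b - p) powr (- (g + 1) / b)) \<le> lp_norm M p \<zeta>"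
    and "lp_norm M p \<zeta> \<le> ennreal (CU * exp ((g + 1) * (1 + b * b)) * (b - p) powr (- (g + 1) / b))"
proof -
  define s where "s = b - p"
  define G where "G = g + 1"
  have s0: "s > 0" "s \<le> b - 1" using p unfolding s_def by auto
  have G0: "G > 0" unfolding G_def using g0 by simp
  define m where "m = (\<integral>\<^sup>+ \<omega>. ennreal (\<bar>\<zeta> \<omega>\<bar> powr p) \<partial>M)"
  have lo: "ennreal ((1 - exp (-1)) * exp (- 2 * real K * b) * s powr (- G)) \<le> m"
    using lower[OF p] unfolding m_def s_def G_def .
  have hi: "m \<le> ennreal (exp (real K * b) + 4 * exp b * (1 + b) * (2 * g) powr g * s powr (- G))"
    using upper[OF p] unfolding m_def s_def G_def .
  have one: "1 \<le> (b - 1) powr G * s powr (- G)"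
  proof -
    have "s powr G \<le> (b - 1) powr G" using s0 G0 by (intro powr_mono2) auto
    moreover have "s powr G > 0" using s0 by simp
    moreover have "s powr (- G) = 1 / s powr G" by (simp add: powr_minus divide_inverse)
    ultimately show ?thesis by (simp add: le_divide_eq)
  qed
  have hi2: "exp (real K * b) + 4 * exp b * (1 + b) * (2 * g) powr g * s powr (- G) \<le> CU * s powr (- G)"
  proof -
    have "exp (real K * b) \<le> exp (real K * b) * ((b - 1) powr G * s powr (- G))"
      using one by simp
    then have "exp (real K * b) + 4 * exp b * (1 + b) * (2 * g) powr g * s powr (- G)
        \<le> (exp (real K * b) * (b - 1) powr (g + 1) + 4 * exp b * (1 + b) * (2 * g) powr g) * s powr (- G)"
      unfolding G_def by (simp add: algebra_simps)
    also have "\<dots> \<le> CU * s powr (- G)" unfolding CU_def by (intro mult_right_mono) auto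
    finally show ?thesis .
  qed
  have mfin: "m < top" using hi by (simp add: le_less_trans)
  define r where "r = enn2real m"
  have mr: "m = ennreal r" unfolding r_def using mfin by simp
  have r0: "r \<ge> 0" unfolding r_def by simp
  have rlo: "cL * s powr (- G) \<le> r"
  proof -
    have "(1 - exp (-1)) * exp (- 2 * real K * b) * s powr (- G) \<le> r" using lo r0 unfolding mr by simp
    moreover have "cL \<le> (1 - exp (-1)) * exp (- 2 * real K * b)" unfolding cL_def by simp
    ultimately show ?thesis by (meson mult_right_mono order_trans powr_ge_zero)
  qed
  have rhi: "r \<le> CU * s powr (- G)"
    using hi hi2 unfolding mr by (meson ennreal_le_iff order_trans powr_ge_zero mult_nonneg_nonneg CU order_trans zero_le_one)
  have lpn: "lp_norm M p \<zeta> = ennreal (r powr (1 / p))"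
    unfolding lp_norm_def Let_def m_def[symmetric] using mfin mr r0 by simp
  have ip: "0 \<le> 1 / p" "1 / p \<le> 1" using p by auto
  have "cL * s powr (- G * (1 / p)) \<le> cL powr (1 / p) * s powr (- G * (1 / p))"
  proof -
    have "cL powr 1 \<le> cL powr (1 / p)" using cL ip by (intro powr_mono') auto
    then show ?thesis using cL by (intro mult_right_mono) (auto simp: powr_one)
  qed
  also have "\<dots> = (cL * s powr (- G)) powr (1 / p)" using cL s0 by (simp add: powr_mult powr_powr)
  also have "\<dots> \<le> r powr (1 / p)" using rlo cL s0 ip by (intro powr_mono2) auto
  finally have A1: "cL * s powr (- G * (1 / p)) \<le> r powr (1 / p)" .
  have "r powr (1 / p) \<le> (CU * s powr (- G)) powr (1 / p)" using rhi r0 ip by (intro powr_mono2) auto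
  also have "\<dots> = CU powr (1 / p) * s powr (- G * (1 / p))" using CU s0 by (simp add: powr_mult powr_powr)
  also have "\<dots> \<le> CU * s powr (- G * (1 / p))"
  proof -
    have "CU powr (1 / p) \<le> CU powr 1" using CU ip by (intro powr_mono) auto
    then show ?thesis using CU by (intro mult_right_mono) (auto simp: powr_one)
  qed
  finally have A2: "r powr (1 / p) \<le> CU * s powr (- G * (1 / p))" .
  have R1: "exp (- (G * (1 + b * b))) * s powr (- G / b) \<le> s powr (- G * (1 / p))"
    using ratio(1)[OF b1 p G0] unfolding s_def .
  have R2: "s powr (- G * (1 / p)) \<le> exp (G * (1 + b * b)) * s powr (- G / b)"
    using ratio(2)[OF b1 p G0] unfolding s_def .
  have "cL * exp (- (G * (1 + b * b))) * s powr (- G / b) \<le> r powr (1 / p)"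
    using order_trans[OF mult_left_mono[OF R1, of cL] A1] cL by (simp add: mult.assoc)
  then show "ennreal (cL * exp (- ((g + 1) * (1 + b * b))) * (b - p) powr (- (g + 1) / b)) \<le> lp_norm M p \<zeta>"
    unfolding lpn s_def G_def by (intro ennreal_leI) simp
  have "r powr (1 / p) \<le> CU * exp (G * (1 + b * b)) * s powr (- G / b)"
    using order_trans[OF A2 mult_left_mono[OF R2, of CU]] CU by (simp add: mult.assoc)
  then show "lp_norm M p \<zeta> \<le> ennreal (CU * exp ((g + 1) * (1 + b * b)) * (b - p) powr (- (g + 1) / b))"
    unfolding lpn s_def G_def by (intro ennreal_leI) simp
qed

end


context mt2 begin

lemma result:
  shows "(\<exists>c1 c2. 0 < c1 \<and> 0 < c2 \<and>
            (\<forall>p\<in>{1..<b}. ennreal (c1 * (b - p) powr (- (g + 1) / b)) \<le> lp_norm M p \<zeta> \<and>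
                          lp_norm M p \<zeta> \<le> ennreal (c2 * (b - p) powr (- (g + 1) / b))))
         \<and> \<zeta> \<in> gls_space M b (psi_bd b (g + 1))
         \<and> gls_norm M b (psi_bd b g) \<zeta> = \<top>"
proof -
  define c1 where "c1 = cL * exp (- ((g + 1) * (1 + b * b)))"
  define c2 where "c2 = CU * exp ((g + 1) * (1 + b * b))"
  have c1: "c1 > 0" unfolding c1_def using cL by simp
  have c2: "c2 > 0" unfolding c2_def using CU by simp
  have LB: "ennreal (c1 * (b - p) powr (- (g + 1) / b)) \<le> lp_norm M p \<zeta>" if "p \<in> {1..<b}" for p
    using lp_bounds(1)[of p] that unfolding c1_def by simp
  have UB: "lp_norm M p \<zeta> \<le> ennreal (c2 * (b - p) powr (- (g + 1) / b))" if "p \<in> {1..<b}" for p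
    using lp_bounds(2)[of p] that unfolding c2_def by simp
  have P1: "\<exists>c1 c2. 0 < c1 \<and> 0 < c2 \<and>
            (\<forall>p\<in>{1..<b}. ennreal (c1 * (b - p) powr (- (g + 1) / b)) \<le> lp_norm M p \<zeta> \<and>
                          lp_norm M p \<zeta> \<le> ennreal (c2 * (b - p) powr (- (g + 1) / b)))"
    using c1 c2 LB UB by blast
  have "gls_norm M b (psi_bd b (g + 1)) \<zeta> \<le> ennreal c2"
    unfolding gls_norm_def
  proof (rule SUP_least)
    fix p assume p: "p \<in> {1..<b}"
    have ps: "psi_bd b (g + 1) p > 0" unfolding psi_bd_def using p by simp
    have "lp_norm M p \<zeta> / ennreal (psi_bd b (g + 1) p) \<le> ennreal (c2 * psi_bd b (g + 1) p) / ennreal (psi_bd b (g + 1) p)"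
      using UB[OF p] unfolding psi_bd_def by (intro divide_right_mono_ennreal)
    also have "\<dots> = ennreal (c2 * psi_bd b (g + 1) p / psi_bd b (g + 1) p)"
      using ps c2 by (intro divide_ennreal) auto
    also have "\<dots> = ennreal c2" using ps by simp
    finally show "lp_norm M p \<zeta> / ennreal (psi_bd b (g + 1) p) \<le> ennreal c2" .
  qed
  then have P2: "\<zeta> \<in> gls_space M b (psi_bd b (g + 1))"
    unfolding gls_space_def using zm by (simp add: le_less_trans)
  have P3: "gls_norm M b (psi_bd b g) \<zeta> = \<top>"
    unfolding gls_norm_def SUP_eq_top_iff
  proof (intro allI impI)
    fix x :: ennreal assume "x < \<top>"
    then obtain r where r0: "r \<ge> 0" and xr: "x = ennreal r" by (auto simp: less_top_ennreal)
    define A where "A = 2 + r / c1"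
    have A2: "A \<ge> 2" unfolding A_def using r0 c1 by simp
    define s where "s = min (b - 1) (A powr (- b))"
    have s0: "s > 0" unfolding s_def using b1 A2 by simp
    have s1: "s \<le> b - 1" "s \<le> A powr (- b)" unfolding s_def by auto
    define p where "p = b - s"
    have p: "p \<in> {1..<b}" unfolding p_def using s0 s1 by auto
    have bs: "b - p = s" unfolding p_def by simp
    have "A = (A powr (- b)) powr (- 1 / b)" using A2 b1 by (simp add: powr_powr)
    also have "\<dots> \<le> s powr (- 1 / b)" using s0 s1 b1 by (intro powr_mono2') auto
    finally have As: "A \<le> s powr (- 1 / b)" .
    have "c1 * A = 2 * c1 + r" unfolding A_def using c1 by (simp add: algebra_simps)
    then have "r < c1 * A" using c1 by simp
    also have "\<dots> \<le> c1 * s powr (- 1 / b)" using As c1 by simp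
    finally have rl: "r < c1 * s powr (- 1 / b)" .
    have ps: "psi_bd b g p > 0" unfolding psi_bd_def using p by simp
    have ex: "- (g + 1) / b - (- g / b) = - 1 / b" using b1 by (simp add: field_simps)
    have "c1 * s powr (- (g + 1) / b) / s powr (- g / b) = c1 * s powr (- 1 / b)"
    proof -
      have "s powr (- (g + 1) / b - (- g / b)) = s powr (- (g + 1) / b) / s powr (- g / b)" by (rule powr_diff)
      then have "s powr (- (g + 1) / b) / s powr (- g / b) = s powr (- 1 / b)" unfolding ex by simp
      then show ?thesis by (simp only: times_divide_eq_right[symmetric])
    qed
    then have "x < ennreal (c1 * s powr (- (g + 1) / b) / psi_bd b g p)"
      unfolding xr psi_bd_def bs using rl r0 by (simp add: ennreal_less_iff)
    also have "\<dots> = ennreal (c1 * s powr (- (g + 1) / b)) / ennreal (psi_bd b g p)"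
      using ps c1 by (intro divide_ennreal[symmetric]) auto
    also have "\<dots> \<le> lp_norm M p \<zeta> / ennreal (psi_bd b g p)"
      using LB[OF p] unfolding bs by (intro divide_right_mono_ennreal)
    finally show "\<exists>i\<in>{1..<b}. x < lp_norm M i \<zeta> / ennreal (psi_bd b g i)" using p by blast
  qed
  show ?thesis using P1 P2 P3 by blast
qed

end

theorem mainTheorem2:
  fixes M :: "'a measure" and \<zeta> :: "'a \<Rightarrow> real" and b \<gamma> x0 :: real
  assumes "prob_space M"
    and "\<zeta> \<in> borel_measurable M"
    and "b > 1" and "\<gamma> > 0" and "x0 \<ge> exp 1"
    and "\<forall>x\<ge>x0. tail_fun M \<zeta> x = x powr (- b) * (ln x) powr \<gamma>"
  shows "(\<exists>c1 c2. 0 < c1 \<and> 0 < c2 \<and>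
            (\<forall>p\<in>{1..<b}. ennreal (c1 * (b - p) powr (- (\<gamma> + 1) / b)) \<le> lp_norm M p \<zeta> \<and>
                          lp_norm M p \<zeta> \<le> ennreal (c2 * (b - p) powr (- (\<gamma> + 1) / b))))
         \<and> \<zeta> \<in> gls_space M b (psi_bd b (\<gamma> + 1))
         \<and> gls_norm M b (psi_bd b \<gamma>) \<zeta> = \<top>"
proof -
  define K where "K = nat \<lceil>ln x0\<rceil>"
  have x0pos: "x0 > 0" using assms(5) exp_gt_zero[of 1] by linarith
  have "exp 1 \<le> exp (ln x0)" using assms(5) x0pos by simp
  then have lnx0: "ln x0 \<ge> 1" by (simp only: exp_le_cancel_iff)
  have KK: "real K \<ge> ln x0" unfolding K_def using lnx0 by linarith
  have K1: "K \<ge> 1" unfolding K_def using lnx0 by linarith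
  have tl: "tail_fun M \<zeta> (exp (real k)) = exp (real k) powr (- b) * (real k) powr \<gamma>" if "k \<ge> K" for k
  proof -
    have "exp (real k) \<ge> exp (ln x0)" using that KK by simp
    then have "exp (real k) \<ge> x0" using x0pos by simp
    then have "tail_fun M \<zeta> (exp (real k)) = exp (real k) powr (- b) * (ln (exp (real k))) powr \<gamma>"
      using assms(6) by blast
    then show ?thesis by (simp only: ln_exp)
  qed
  have loc: "mt2 M \<zeta> b \<gamma> K"
  proof (rule mt2.intro)
    show "prob_space M" by (rule assms(1))
    show "mt2_axioms M \<zeta> b \<gamma> K"
      by (rule mt2_axioms.intro) (fact assms(2), fact assms(3), fact assms(4), fact K1, fact tl)
  qed
  interpret mt2 M \<zeta> b \<gamma> K by (rule loc)
  show ?thesis by (rule result)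
qed

end
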